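(* Let $n\ge1$, $p\ge2$, and let $\mathbf X\in\mathbb R^{n\times p}$ have i.i.d.\ rows $\mathcal N_p(0,\Sigma^* )$ with $\Sigma^*$ positive definite. Let $\Omega^*=(\Sigma^* )^{-1}=(\omega^*_{ij})$, $\phi^*_j=1/\omega^*_{jj}$, $B^*_{ij}=\omega^*_{ij}/\omega^*_{jj}$, and assume $\omega^*_{j1}\neq0$ for all $j\in[p]$ (equivalently $B^*_{j1}\ne0$ and $B^*_{1j}\neq 0$ for all $j$). Let $S_n=\frac1n\mathbf X^\top\mathbf X$ and, for $\phi\in(0,\infty)^p$, $$\ell(\phi)=-\sum_{j=1}^p\Big\{\log\phi_j+\frac{(S_nB^* )_{jj}}{\phi_j}\Big\}.$$ Let $\mathcal F=\{\phi\in(0,\infty)^p:\ B^*D_\phi^{-1}\text{ is symmetric positive definite}\}$. Then $\mathcal F=\{\phi:\ \phi_1>0,\ \phi_j=(B^*_{1j}/B^*_{j1})\phi_1\ \forall j\}$, and almost surely $\ell$ has a unique maximizer on $\mathcal F$, namely $$\hat\phi^{\rm SML}_j=\frac1p\,\frac{B^*_{1j}}{B^*_{j1}}\,\mathrm{trace}\big(S_nB^*D_{B^*_{\bullet,1}}D_{B^*_{1,\bullet}}^{-1}\big),\qquad j\in[p].$$ Moreover, for every $j\in[p]$, $$\mathbf E\big[(\hat\phi^{\rm SML}_j-\phi^*_j)^2\big]=\frac{2(\phi^*_j)^2}{np},$$ and for every $t>0$, $$\mathbf P\bigg(\max_{j\in[p]}\frac{|\hat\phi^{\rm SML}_j-\phi^*_j|}{\phi^*_j}>2\Big(\frac{t+\log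 p}{np}\Big)^{1/2}+\frac{2(t+\log p)}{np}\bigg)\le 2e^{-t}.$$
   Context: For a vector $v\in\mathbb R^p$, $D_v$ is the $p\times p$ diagonal matrix with diagonal entries $v_1,\dots,v_p$. $B^*_{\bullet,1}$ is the first column and $B^*_{1,\bullet}$ the first row of $B^*$. Up to additive constants and the factor $n/2$, $\ell(\phi)+\log|B^*|$ is the Gaussian log-likelihood of the data under precision matrix $B^*D_\phi^{-1}$ (profiled in the mean). *)

theory Defs
  imports "HOL-Probability.Probability"
begin

definition diag_mat :: "real^'n \<Rightarrow> real^'n^'n" where
  "diag_mat v = (\<chi> i j. if i = j then v $ i else 0)"

definition sym_posdef :: "real^'n^'n \<Rightarrow> bool" where
  "sym_posdef A \<longleftrightarrow> transpose A = A \<and> (\<forall>x. x \<noteq> 0 \<longrightarrow> 0 < x \<bullet> (A *v x))"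

definition mvn_density :: "real^'n^'n \<Rightarrow> real^'n \<Rightarrow> real" where
  "mvn_density Sig x =
     exp (- (x \<bullet> (matrix_inv Sig *v x)) / 2) / sqrt ((2 * pi) ^ CARD('n) * det Sig)"

text \<open>S_n = (1/n) X^T X, where row i of X is x i (i < n).\<close>
definition sample_cov :: "nat \<Rightarrow> (nat \<Rightarrow> real^'n) \<Rightarrow> real^'n^'n" where
  "sample_cov n x = (\<chi> a b. (\<Sum>i<n. x i $ a * x i $ b) / real n)"

definition Bmat :: "real^'n^'n \<Rightarrow> real^'n^'n" where
  "Bmat Om = (\<chi> i j. Om $ i $ j / Om $ j $ j)"

definition phistar :: "real^'n^'n \<Rightarrow> real^'n" where
  "phistar Om = (\<chi> j. 1 / Om $ j $ j)"

definition loglik :: "real^'n^'n \<Rightarrow> real^'n^'n \<Rightarrow> real^'n \<Rightarrow> real" where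
  "loglik S B phi = - (\<Sum>j\<in>UNIV. ln (phi $ j) + (S ** B) $ j $ j / phi $ j)"

definition feasible :: "real^'n^'n \<Rightarrow> (real^'n) set" where
  "feasible B = {phi. (\<forall>j. 0 < phi $ j) \<and> sym_posdef (B ** matrix_inv (diag_mat phi))}"

text \<open>The SML estimator; k plays the role of the first index 1.\<close>
definition phi_sml :: "'n \<Rightarrow> real^'n^'n \<Rightarrow> real^'n^'n \<Rightarrow> real^'n" where
  "phi_sml k S B = (\<chi> j. (1 / real CARD('n)) * (B $ k $ j / B $ j $ k) *
      trace (S ** B ** diag_mat (column k B) ** matrix_inv (diag_mat (row k B))))"

end

theory Submission
  imports Defs "HOL-Real_Asymp.Real_Asymp"
begin


lemma matrix_inv_eqI:
  fixes A A' :: "real^'n^'n"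
  assumes "A ** A' = mat 1" "A' ** A = mat 1"
  shows "matrix_inv A = A'"
proof -
  have ex: "\<exists>B. A ** B = mat 1 \<and> B ** A = mat 1" using assms by blast
  define B where "B = matrix_inv A"
  have B: "A ** B = mat 1 \<and> B ** A = mat 1"
    unfolding B_def matrix_inv_def using someI_ex[OF ex] .
  have "B = B ** (A ** A')" using assms by simp
  also have "\<dots> = (B ** A) ** A'" by (simp add: matrix_mul_assoc)
  also have "\<dots> = A'" using B by simp
  finally show ?thesis unfolding B_def .
qed

lemma spd_inv:
  fixes Sig :: "real^'n^'n"
  assumes "sym_posdef Sig"
  shows "Sig ** matrix_inv Sig = mat 1" "matrix_inv Sig ** Sig = mat 1"
proof -
  have inj: "inj ((*v) Sig)"
  proof (rule injI)
    fix x y assume h: "Sig *v x = Sig *v y"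
    show "x = y"
    proof (rule ccontr)
      assume "x \<noteq> y" then have "x - y \<noteq> 0" by simp
      then have "0 < (x - y) \<bullet> (Sig *v (x - y))" using assms unfolding sym_posdef_def by blast
      moreover have "Sig *v (x - y) = 0" using h by (simp add: matrix_vector_mult_diff_distrib)
      ultimately show False by simp
    qed
  qed
  then have "invertible Sig" using matrix_left_invertible_injective invertible_left_inverse by blast
  then have ex: "\<exists>B. Sig ** B = mat 1 \<and> B ** Sig = mat 1" unfolding invertible_def by blast
  show "Sig ** matrix_inv Sig = mat 1" "matrix_inv Sig ** Sig = mat 1"
    unfolding matrix_inv_def using someI_ex[OF ex] by auto
qed

lemma spd_inv_sym:
  fixes Sig :: "real^'n^'n"
  assumes "sym_posdef Sig"
  shows "transpose (matrix_inv Sig) = matrix_inv Sig"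
proof -
  let ?O = "matrix_inv Sig"
  have T: "transpose Sig = Sig" using assms unfolding sym_posdef_def by blast
  have "transpose ?O ** Sig = mat 1"
    using arg_cong[OF spd_inv(1)[OF assms], of transpose] by (simp add: matrix_transpose_mul T)
  then have "transpose ?O = transpose ?O ** (Sig ** ?O)" using spd_inv(1)[OF assms] by simp
  also have "\<dots> = ?O" by (simp add: matrix_mul_assoc \<open>transpose ?O ** Sig = mat 1\<close>)
  finally show ?thesis .
qed

lemma spd_inv_entry_sym:
  fixes Sig :: "real^'n^'n"
  assumes "sym_posdef Sig"
  shows "matrix_inv Sig $ i $ j = matrix_inv Sig $ j $ i"
  using arg_cong[OF spd_inv_sym[OF assms], of "\<lambda>A. A $ j $ i"] by (simp add: transpose_def)

lemma spd_inv_pd: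
  fixes Sig :: "real^'n^'n"
  assumes "sym_posdef Sig" "x \<noteq> 0"
  shows "0 < x \<bullet> (matrix_inv Sig *v x)"
proof -
  define y where "y = matrix_inv Sig *v x"
  have xy: "Sig *v y = x" unfolding y_def using spd_inv(1)[OF assms(1)]
    by (simp add: matrix_vector_mul_assoc)
  have "y \<noteq> 0" using xy assms(2) by auto
  then have "0 < y \<bullet> (Sig *v y)" using assms(1) unfolding sym_posdef_def by blast
  then show ?thesis using xy unfolding y_def[symmetric] by (simp add: inner_commute)
qed

lemma spd_inv_diag_pos:
  fixes Sig :: "real^'n^'n"
  assumes "sym_posdef Sig"
  shows "0 < matrix_inv Sig $ j $ j"
proof -
  have "0 < axis j 1 \<bullet> (matrix_inv Sig *v axis j 1)"
    using spd_inv_pd[OF assms, of "axis j 1"] by (simp add: axis_eq_0_iff)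
  also have "axis j 1 \<bullet> (matrix_inv Sig *v axis j 1) = matrix_inv Sig $ j $ j"
    unfolding inner_axis' by (simp add: matrix_vector_mult_def axis_def if_distrib cong: if_cong)
  finally show ?thesis .
qed

lemma diag_mat_mult_entry: "(A ** diag_mat d) $ i $ j = A $ i $ j * d $ j"
  by (simp add: matrix_matrix_mult_def diag_mat_def if_distrib cong: if_cong)

lemma diag_mat_inv:
  fixes d :: "real^'n"
  assumes "\<And>j. d $ j \<noteq> 0"
  shows "matrix_inv (diag_mat d) = diag_mat (\<chi> j. 1 / d $ j)"
  by (rule matrix_inv_eqI; unfold vec_eq_iff diag_mat_mult_entry)
     (auto simp: mat_def diag_mat_def assms)

lemma feasible_iff_c:
  fixes Sig :: "real^'n^'n"
  assumes spd: "sym_posdef Sig" and nz: "\<And>j. matrix_inv Sig $ j $ k \<noteq> 0"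
  shows "phi \<in> feasible (Bmat (matrix_inv Sig)) \<longleftrightarrow>
         (\<exists>c>0. \<forall>j. phi $ j = c / matrix_inv Sig $ j $ j)"
proof -
  let ?O = "matrix_inv Sig"
  have dpos: "\<And>j. 0 < ?O $ j $ j" using spd_inv_diag_pos[OF spd] .
  have sym: "\<And>i j. ?O $ i $ j = ?O $ j $ i" using spd_inv_entry_sym[OF spd] .
  show ?thesis
  proof
    assume "phi \<in> feasible (Bmat ?O)"
    then have pos: "\<And>j. 0 < phi $ j" and sp: "sym_posdef (Bmat ?O ** matrix_inv (diag_mat phi))"
      unfolding feasible_def by auto
    have inv: "matrix_inv (diag_mat phi) = diag_mat (\<chi> j. 1 / phi $ j)"
      using pos by (intro diag_mat_inv) (metis less_irrefl)
    have T: "transpose (Bmat ?O ** diag_mat (\<chi> j. 1 / phi $ j)) = Bmat ?O ** diag_mat (\<chi> j. 1 / phi $ j)"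
      using sp inv unfolding sym_posdef_def by simp
    have eq: "?O $ j $ j * phi $ j = ?O $ k $ k * phi $ k" for j
    proof -
      have "(Bmat ?O ** diag_mat (\<chi> j. 1 / phi $ j)) $ j $ k = (Bmat ?O ** diag_mat (\<chi> j. 1 / phi $ j)) $ k $ j"
        using arg_cong[OF T, of "\<lambda>A. A $ k $ j"] by (simp add: transpose_def)
      then have "?O $ j $ k / ?O $ k $ k / phi $ k = ?O $ k $ j / ?O $ j $ j / phi $ j"
        by (simp add: diag_mat_mult_entry Bmat_def)
      then show ?thesis using nz[of j] sym[of j k] dpos[of j] dpos[of k] pos[of j] pos[of k]
        by (simp add: field_simps)
    qed
    show "\<exists>c>0. \<forall>j. phi $ j = c / ?O $ j $ j"
    proof (rule exI[of _ "?O $ k $ k * phi $ k"], intro conjI allI)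
      show "0 < ?O $ k $ k * phi $ k" using dpos pos by simp
      fix j show "phi $ j = ?O $ k $ k * phi $ k / ?O $ j $ j"
      proof -
        have "phi $ j = (?O $ j $ j * phi $ j) / ?O $ j $ j" using dpos[of j] by simp
        also have "\<dots> = ?O $ k $ k * phi $ k / ?O $ j $ j" by (simp only: eq[of j])
        finally show ?thesis .
      qed
    qed
  next
    assume "\<exists>c>0. \<forall>j. phi $ j = c / ?O $ j $ j"
    then obtain c where c: "c > 0" and ph: "\<And>j. phi $ j = c / ?O $ j $ j" by blast
    have pos: "\<And>j. 0 < phi $ j" using ph c dpos by simp
    have inv: "matrix_inv (diag_mat phi) = diag_mat (\<chi> j. 1 / phi $ j)"
      using pos by (intro diag_mat_inv) (metis less_irrefl)
    have M: "Bmat ?O ** matrix_inv (diag_mat phi) = (\<chi> i j. ?O $ i $ j / c)"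
    proof -
      have nz0: "\<And>j. ?O $ j $ j \<noteq> 0" using dpos by (metis less_irrefl)
      show ?thesis unfolding inv using c by (simp add: vec_eq_iff diag_mat_mult_entry Bmat_def ph nz0)
    qed
    have Mv: "(\<chi> i j. ?O $ i $ j / c) *v x = (1 / c) *\<^sub>R (?O *v x)" for x
      by (simp add: vec_eq_iff matrix_vector_mult_def sum_divide_distrib)
    have "sym_posdef (\<chi> i j. ?O $ i $ j / c)"
      unfolding sym_posdef_def
    proof
      show "transpose (\<chi> i j. ?O $ i $ j / c) = (\<chi> i j. ?O $ i $ j / c)"
      proof -
        have "\<And>i j. ?O $ j $ i / c = ?O $ i $ j / c" using sym by metis
        then show ?thesis by (simp add: vec_eq_iff transpose_def)
      qed
      show "\<forall>x. x \<noteq> 0 \<longrightarrow> 0 < x \<bullet> ((\<chi> i j. ?O $ i $ j / c) *v x)"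
        using spd_inv_pd[OF spd] c by (simp add: Mv)
    qed
    then show "phi \<in> feasible (Bmat ?O)" unfolding feasible_def using pos M by simp
  qed
qed

lemma feasible_char:
  fixes Sig :: "real^'n^'n"
  assumes spd: "sym_posdef Sig" and nz: "\<And>j. matrix_inv Sig $ j $ k \<noteq> 0"
  shows "feasible (Bmat (matrix_inv Sig)) =
           {phi. 0 < phi $ k \<and> (\<forall>j. phi $ j =
              (Bmat (matrix_inv Sig) $ k $ j / Bmat (matrix_inv Sig) $ j $ k) * phi $ k)}"
proof -
  let ?O = "matrix_inv Sig"
  have dpos: "\<And>j. 0 < ?O $ j $ j" using spd_inv_diag_pos[OF spd] .
  have sym: "\<And>i j. ?O $ i $ j = ?O $ j $ i" using spd_inv_entry_sym[OF spd] .
  have ratio: "Bmat ?O $ k $ j / Bmat ?O $ j $ k = ?O $ k $ k / ?O $ j $ j" for j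
    using nz[of j] sym[of j k] dpos[of j] dpos[of k] by (simp add: Bmat_def field_simps)
  show ?thesis
  proof (intro set_eqI iffI)
    fix phi assume "phi \<in> feasible (Bmat ?O)"
    then obtain c where c: "c > 0" and ph: "\<And>j. phi $ j = c / ?O $ j $ j"
      using feasible_iff_c[OF spd nz] by blast
    show "phi \<in> {phi. 0 < phi $ k \<and> (\<forall>j. phi $ j = (Bmat ?O $ k $ j / Bmat ?O $ j $ k) * phi $ k)}"
    proof -
      have "0 < phi $ k" using c dpos[of k] by (simp add: ph[of k])
      moreover have "phi $ j = (?O $ k $ k / ?O $ j $ j) * phi $ k" for j
        using dpos[of k] by (simp add: ph[of j] ph[of k])
      ultimately show ?thesis unfolding ratio mem_Collect_eq by blast
    qed
  next
    fix phi assume A: "phi \<in> {phi. 0 < phi $ k \<and> (\<forall>j. phi $ j = (Bmat ?O $ k $ j / Bmat ?O $ j $ k) * phi $ k)}"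
    have p1: "0 < phi $ k" using A by blast
    have p0: "\<And>j. phi $ j = (Bmat ?O $ k $ j / Bmat ?O $ j $ k) * phi $ k" using A by blast
    have p: "0 < phi $ k" "\<And>j. phi $ j = (?O $ k $ k / ?O $ j $ j) * phi $ k"
      using p1 p0[unfolded ratio] by blast+
    show "phi \<in> feasible (Bmat ?O)"
      unfolding feasible_iff_c[OF spd nz]
    proof (rule exI[of _ "?O $ k $ k * phi $ k"], intro conjI allI)
      show "0 < ?O $ k $ k * phi $ k" using dpos p(1) by simp
      fix j show "phi $ j = ?O $ k $ k * phi $ k / ?O $ j $ j"
        by (subst p(2)) simp
    qed
  qed
qed

lemma ln_less_minus_one:
  fixes r :: real assumes "0 < r" "r \<noteq> 1" shows "ln r < r - 1"
proof -
  have s: "sqrt r > 0" using assms by simp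
  have "ln r = 2 * ln (sqrt r)" using assms by (simp add: ln_sqrt)
  also have "\<dots> \<le> 2 * (sqrt r - 1)" using ln_le_minus_one[OF s] by simp
  also have "\<dots> < r - 1"
  proof -
    have "sqrt r \<noteq> 1" using assms by simp
    then have "0 < (sqrt r - 1)^2" by simp
    then show ?thesis using assms by (simp add: power2_eq_square algebra_simps)
  qed
  finally show ?thesis .
qed

lemma phi_sml_eq:
  fixes Sig :: "real^'n^'n"
  assumes spd: "sym_posdef Sig" and nz: "\<And>j. matrix_inv Sig $ j $ k \<noteq> 0"
  shows "phi_sml k S (Bmat (matrix_inv Sig)) $ j
           = trace (S ** matrix_inv Sig) / (real CARD('n) * matrix_inv Sig $ j $ j)"
proof -
  let ?O = "matrix_inv Sig"
  let ?B = "Bmat ?O"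
  have dpos: "\<And>j. 0 < ?O $ j $ j" using spd_inv_diag_pos[OF spd] .
  have sym: "\<And>i j. ?O $ i $ j = ?O $ j $ i" using spd_inv_entry_sym[OF spd] .
  have nz0: "\<And>j. ?O $ j $ j \<noteq> 0" using dpos by (metis less_irrefl)
  have rownz: "\<And>j. row k ?B $ j \<noteq> 0"
    using nz sym nz0 by (simp add: row_def Bmat_def)
  have inv: "matrix_inv (diag_mat (row k ?B)) = diag_mat (\<chi> j. 1 / row k ?B $ j)"
    by (rule diag_mat_inv[OF rownz])
  have diag: "(S ** ?B ** diag_mat (column k ?B) ** matrix_inv (diag_mat (row k ?B))) $ a $ a
      = (S ** ?O) $ a $ a / ?O $ k $ k" for a
  proof -
    have "(S ** ?B ** diag_mat (column k ?B) ** matrix_inv (diag_mat (row k ?B))) $ a $ a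
        = (S ** ?B) $ a $ a * (?B $ a $ k / ?B $ k $ a)"
      unfolding inv diag_mat_mult_entry by (simp add: row_def column_def)
    also have "?B $ a $ k / ?B $ k $ a = ?O $ a $ a / ?O $ k $ k"
      using nz[of a] sym[of a k] nz0[of a] nz0[of k] by (simp add: Bmat_def field_simps)
    also have "(S ** ?B) $ a $ a = (S ** ?O) $ a $ a / ?O $ a $ a"
      by (simp add: matrix_matrix_mult_def Bmat_def sum_divide_distrib)
    finally show ?thesis using nz0[of a] by simp
  qed
  have tr: "trace (S ** ?B ** diag_mat (column k ?B) ** matrix_inv (diag_mat (row k ?B)))
      = trace (S ** ?O) / ?O $ k $ k"
    unfolding trace_def diag by (simp add: sum_divide_distrib)
  have ratio: "?B $ k $ j / ?B $ j $ k = ?O $ k $ k / ?O $ j $ j"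
    using nz[of j] sym[of j k] nz0[of j] nz0[of k] by (simp add: Bmat_def field_simps)
  show ?thesis
    unfolding phi_sml_def vec_lambda_beta tr ratio using nz0[of k] by simp
qed

lemma trace_sample_cov:
  fixes Om :: "real^'n^'n"
  shows "trace (sample_cov n x ** Om) = (\<Sum>i<n. x i \<bullet> (Om *v x i)) / real n"
proof -
  have "trace (sample_cov n x ** Om) = (\<Sum>a\<in>UNIV. \<Sum>b\<in>UNIV. (\<Sum>i<n. x i $ a * x i $ b) / real n * Om $ b $ a)"
    by (simp add: trace_def matrix_matrix_mult_def sample_cov_def)
  also have "\<dots> = (\<Sum>a\<in>UNIV. \<Sum>b\<in>UNIV. \<Sum>i<n. x i $ b * (Om $ b $ a * x i $ a) / real n)"
    by (simp add: sum_divide_distrib sum_distrib_left sum_distrib_right mult_ac)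
  also have "\<dots> = (\<Sum>a\<in>UNIV. \<Sum>i<n. \<Sum>b\<in>UNIV. x i $ b * (Om $ b $ a * x i $ a) / real n)"
    by (rule sum.cong[OF refl], rule sum.swap)
  also have "\<dots> = (\<Sum>i<n. \<Sum>a\<in>UNIV. \<Sum>b\<in>UNIV. x i $ b * (Om $ b $ a * x i $ a) / real n)"
    by (rule sum.swap)
  also have "\<dots> = (\<Sum>i<n. \<Sum>b\<in>UNIV. \<Sum>a\<in>UNIV. x i $ b * (Om $ b $ a * x i $ a) / real n)"
    by (rule sum.cong[OF refl], rule sum.swap)
  also have "\<dots> = (\<Sum>i<n. x i \<bullet> (Om *v x i)) / real n"
    by (simp add: inner_vec_def matrix_vector_mult_def sum_distrib_left sum_divide_distrib)
  finally show ?thesis .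
qed


lemma loglik_c:
  fixes Om :: "real^'n^'n"
  assumes dpos: "\<And>j. 0 < Om $ j $ j" and c: "c > 0" and ps: "\<And>j. psi $ j = c / Om $ j $ j"
  shows "loglik S (Bmat Om) psi = - (real CARD('n) * ln c + trace (S ** Om) / c) + (\<Sum>j\<in>UNIV. ln (Om $ j $ j))"
proof -
  have nz0: "\<And>j. Om $ j $ j \<noteq> 0" using dpos by (metis less_irrefl)
  have e: "ln (psi $ j) + (S ** Bmat Om) $ j $ j / psi $ j = ln c - ln (Om $ j $ j) + (S ** Om) $ j $ j / c" for j
  proof -
    have "(S ** Bmat Om) $ j $ j = (S ** Om) $ j $ j / Om $ j $ j"
      by (simp add: matrix_matrix_mult_def Bmat_def sum_divide_distrib)
    then show ?thesis using c dpos[of j] nz0[of j] by (simp add: ps ln_div)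
  qed
  show ?thesis unfolding loglik_def e trace_def
    by (simp add: sum.distrib sum_subtractf sum_divide_distrib)
qed

lemma mle_unique:
  fixes p T c :: real
  assumes "p > 0" "T > 0" "c > 0" "c \<noteq> T / p"
  shows "- (p * ln c + T / c) < - (p * ln (T / p) + T / (T / p))"
proof -
  define r where "r = (T / p) / c"
  have r: "r > 0" "r \<noteq> 1" using assms by (auto simp: r_def field_simps)
  have lr: "ln r < r - 1" by (rule ln_less_minus_one[OF r])
  have h: "p * ln r < p * (r - 1)" using lr assms(1) by simp
  have lnr: "ln r = ln (T / p) - ln c"
  proof -
    have tp: "0 < T / p" using assms(1,2) by simp
    show ?thesis unfolding r_def by (rule ln_divide_pos[OF tp assms(3)])
  qed
  have Tc: "T / c = p * r" using assms by (simp add: r_def field_simps)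
  have Tp: "T / (T / p) = p" using assms by simp
  have "p * ln (T / p) - p * ln c < p * r - p" using h unfolding lnr by (simp add: algebra_simps)
  then show ?thesis unfolding Tc Tp by linarith
qed

lemma exp_quad_lower:
  fixes y :: real assumes "0 \<le> y" shows "1 + y + y^2/2 \<le> exp y"
proof -
  let ?f = "\<lambda>t::real. exp t - 1 - t - t^2/2"
  have "?f 0 \<le> ?f y"
  proof (rule DERIV_nonneg_imp_nondecreasing[OF assms])
    fix x :: real assume "0 \<le> x" "x \<le> y"
    have "(?f has_real_derivative (exp x - 1 - x)) (at x)"
      by (auto intro!: derivative_eq_intros simp: power2_eq_square)
    then show "\<exists>d. (?f has_real_derivative d) (at x) \<and> 0 \<le> d"
      using exp_ge_add_one_self[of x] by (intro exI conjI) (auto simp: algebra_simps)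
  qed
  then show ?thesis by simp
qed

lemma exp_quad_upper:
  fixes y :: real assumes "y \<le> 0" shows "exp y \<le> 1 + y + y^2/2"
proof -
  let ?f = "\<lambda>t::real. 1 + t + t^2/2 - exp t"
  have "?f 0 \<le> ?f y"
  proof (rule DERIV_nonpos_imp_nonincreasing[OF assms])
    fix x :: real assume "y \<le> x" "x \<le> 0"
    have "(?f has_real_derivative (1 + x - exp x)) (at x)"
      by (auto intro!: derivative_eq_intros simp: power2_eq_square)
    then show "\<exists>d. (?f has_real_derivative d) (at x) \<and> d \<le> 0"
      using exp_ge_add_one_self[of x] by (intro exI conjI) (auto simp: algebra_simps)
  qed
  then show ?thesis by simp
qed

lemma ln_upper_ms:
  fixes v :: real assumes "0 \<le> v" shows "ln (1 + v) \<le> v * (2 + v) / (2 * (1 + v))"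
proof -
  let ?f = "\<lambda>t::real. (1 + t) / 2 - 1 / (2 * (1 + t)) - ln (1 + t)"
  have "?f 0 \<le> ?f v"
  proof (rule DERIV_nonneg_imp_nondecreasing[OF assms])
    fix x :: real assume x: "0 \<le> x" "x \<le> v"
    have d: "(?f has_real_derivative (1/2 + 1 / (2 * (1 + x)^2) - 1 / (1 + x))) (at x)"
    proof -
      have g2: "2 / ((2 * u) * (2 * u)) = 1 / (2 * (u * u))" if "u > 0" for u :: real
        using that by (simp add: field_simps)
      show ?thesis using g2[of "1 + x"] x by (auto intro!: derivative_eq_intros simp: power2_eq_square)
    qed
    have gen: "1/2 + 1 / (2 * u^2) - 1 / u = (u - 1)^2 / (2 * u^2)" if "u > 0" for u :: real
      using that by (simp add: field_simps power2_eq_square)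
    have "1/2 + 1 / (2 * (1 + x)^2) - 1 / (1 + x) = x^2 / (2 * (1 + x)^2)"
      using gen[of "1 + x"] x by simp
    also have "\<dots> \<ge> 0" by simp
    finally show "\<exists>d. (?f has_real_derivative d) (at x) \<and> 0 \<le> d"
      using d by blast
  qed
  moreover have "v * (2 + v) / (2 * (1 + v)) = (1 + v) / 2 - 1 / (2 * (1 + v))"
    using assms by (simp add: field_simps power2_eq_square)
  ultimately show ?thesis by simp
qed

lemma ln_lower_ms:
  fixes v :: real assumes "0 \<le> v" shows "v - v^2/2 \<le> ln (1 + v)"
proof -
  let ?f = "\<lambda>t::real. ln (1 + t) - (t - t^2/2)"
  have "?f 0 \<le> ?f v"
  proof (rule DERIV_nonneg_imp_nondecreasing[OF assms])
    fix x :: real assume x: "0 \<le> x" "x \<le> v"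
    have d: "(?f has_real_derivative (x^2 / (1 + x))) (at x)"
      using x by (auto intro!: derivative_eq_intros simp: field_simps power2_eq_square)
    show "\<exists>d. (?f has_real_derivative d) (at x) \<and> 0 \<le> d"
      using d x by (intro exI[of _ "x^2 / (1 + x)"] conjI) auto
  qed
  then show ?thesis by simp
qed



lemma qf_cont: "continuous_on UNIV (\<lambda>x::real^'n. x \<bullet> (A *v x))"
  by (intro continuous_intros)

lemma qf_meas[measurable]: "(\<lambda>x::real^'n. x \<bullet> (A *v x)) \<in> borel_measurable borel"
  by (rule borel_measurable_continuous_onI[OF qf_cont])

lemma qf_scale: "(c *\<^sub>R x) \<bullet> (A *v (c *\<^sub>R x)) = c^2 * (x \<bullet> (A *v (x::real^'n)))"
  by (simp add: matrix_vector_mult_scaleR power2_eq_square)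

lemma lborel_scale_qf:
  fixes A :: "real^'n^'n" and H :: "real \<Rightarrow> ennreal"
  assumes H[measurable]: "H \<in> borel_measurable borel" and s: "s > 0"
  shows "(\<integral>\<^sup>+x. H (s * (x \<bullet> (A *v x))) \<partial>lborel)
       = ennreal (s powr (- (real CARD('n) / 2))) * (\<integral>\<^sup>+x. H (x \<bullet> (A *v x)) \<partial>lborel)"
proof -
  define c where "c = 1 / sqrt s"
  have c0: "c \<noteq> 0" "c > 0" using s by (auto simp: c_def)
  have cs: "s * c^2 = 1" using s by (simp add: c_def power_divide)
  have cp: "\<bar>c\<bar> ^ DIM(real^'n) = s powr (- (real CARD('n) / 2))"
  proof -
    have "\<bar>c\<bar> ^ DIM(real^'n) = c ^ CARD('n)" using c0 by simp
    also have "\<dots> = inverse (sqrt s ^ CARD('n))" by (simp add: c_def power_one_over divide_inverse power_inverse)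
    also have "sqrt s ^ CARD('n) = s powr (real CARD('n) / 2)"
    proof -
      have "sqrt s ^ CARD('n) = sqrt s powr real CARD('n)" using s by (simp add: powr_realpow)
      also have "\<dots> = (s powr (1/2)) powr real CARD('n)" using s by (simp add: powr_half_sqrt)
      also have "\<dots> = s powr (real CARD('n) / 2)" by (simp add: powr_powr)
      finally show ?thesis .
    qed
    also have "inverse (s powr (real CARD('n) / 2)) = s powr (- (real CARD('n) / 2))"
      by (simp add: powr_minus)
    finally show ?thesis .
  qed
  have "(\<integral>\<^sup>+x. H (s * (x \<bullet> (A *v x))) \<partial>lborel)
      = (\<integral>\<^sup>+x. H (s * (x \<bullet> (A *v x))) \<partial>density (distr lborel borel (\<lambda>x. 0 + c *\<^sub>R x)) (\<lambda>_. \<bar>c\<bar> ^ DIM(real^'n)))"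
    by (rule arg_cong[where f="\<lambda>M. \<integral>\<^sup>+x. H (s * (x \<bullet> (A *v x))) \<partial>M"], rule lborel_affine[OF c0(1)])
  also have "\<dots> = (\<integral>\<^sup>+x. ennreal (\<bar>c\<bar> ^ DIM(real^'n)) * H (s * ((c *\<^sub>R x) \<bullet> (A *v (c *\<^sub>R x)))) \<partial>lborel)"
    by (simp add: nn_integral_density nn_integral_distr)
  also have "\<dots> = (\<integral>\<^sup>+x. ennreal (\<bar>c\<bar> ^ DIM(real^'n)) * H (x \<bullet> (A *v x)) \<partial>lborel)"
  proof -
    have "s * ((c *\<^sub>R x) \<bullet> (A *v (c *\<^sub>R x))) = x \<bullet> (A *v x)" for x
      unfolding qf_scale mult.assoc[symmetric] cs by simp
    then show ?thesis by (simp only:)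
  qed
  also have "\<dots> = ennreal (\<bar>c\<bar> ^ DIM(real^'n)) * (\<integral>\<^sup>+x. H (x \<bullet> (A *v x)) \<partial>lborel)"
    by (simp add: nn_integral_cmult)
  finally show ?thesis unfolding cp .
qed

lemma mvn_facts:
  fixes Sig :: "real^'n^'n" and Y :: "'a \<Rightarrow> real^'n"
  assumes P: "prob_space M" and D: "distributed M lborel Y (\<lambda>x. ennreal (mvn_density Sig x))"
  shows "\<And>g. g \<in> borel_measurable borel \<Longrightarrow>
            (\<integral>\<^sup>+w. g (Y w) \<partial>M) = (\<integral>\<^sup>+x. ennreal (mvn_density Sig x) * g x \<partial>lborel)"
    and "(\<integral>\<^sup>+x. ennreal (mvn_density Sig x) \<partial>lborel) = 1"
    and "0 < sqrt ((2 * pi) ^ CARD('n) * det Sig)"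
proof -
  interpret prob_space M by (rule P)
  have Ym[measurable]: "Y \<in> borel_measurable M" using distributed_measurable[OF D] by simp
  have fm[measurable]: "(\<lambda>x. ennreal (mvn_density Sig x)) \<in> borel_measurable lborel"
    using distributed_borel_measurable[OF D] .
  have Dd: "distr M lborel Y = density lborel (\<lambda>x. ennreal (mvn_density Sig x))"
    using distributed_distr_eq_density[OF D] .
  show G: "(\<integral>\<^sup>+w. g (Y w) \<partial>M) = (\<integral>\<^sup>+x. ennreal (mvn_density Sig x) * g x \<partial>lborel)"
    if g[measurable]: "g \<in> borel_measurable borel" for g
  proof -
    have "(\<integral>\<^sup>+w. g (Y w) \<partial>M) = (\<integral>\<^sup>+x. g x \<partial>distr M lborel Y)"
      by (rule nn_integral_distr[symmetric]) auto
    also have "\<dots> = (\<integral>\<^sup>+x. ennreal (mvn_density Sig x) * g x \<partial>lborel)"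
      unfolding Dd by (rule nn_integral_density) auto
    finally show ?thesis .
  qed
  have "(\<integral>\<^sup>+x. ennreal (mvn_density Sig x) \<partial>lborel) = (\<integral>\<^sup>+w. 1 \<partial>M)"
    using G[of "\<lambda>_. 1"] by simp
  also have "\<dots> = 1" by (simp add: emeasure_space_1)
  finally show tot: "(\<integral>\<^sup>+x. ennreal (mvn_density Sig x) \<partial>lborel) = 1" .
  show "0 < sqrt ((2 * pi) ^ CARD('n) * det Sig)"
  proof (rule ccontr)
    assume "\<not> ?thesis"
    then have "\<And>x. mvn_density Sig x \<le> 0"
      unfolding mvn_density_def by (simp add: divide_nonneg_nonpos)
    then have "\<And>x. ennreal (mvn_density Sig x) = 0" by (simp add: ennreal_eq_0_iff)
    then show False using tot by simp
  qed
qed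

lemma mgf_single:
  fixes Sig :: "real^'n^'n" and Y :: "'a \<Rightarrow> real^'n"
  assumes P: "prob_space M" and D: "distributed M lborel Y (\<lambda>x. ennreal (mvn_density Sig x))"
    and l: "l < 1/2"
  shows "(\<integral>\<^sup>+w. ennreal (exp (l * (Y w \<bullet> (matrix_inv Sig *v Y w)))) \<partial>M)
       = ennreal ((1 - 2 * l) powr (- (real CARD('n) / 2)))"
proof -
  let ?O = "matrix_inv Sig"
  define C where "C = sqrt ((2 * pi) ^ CARD('n) * det Sig)"
  have C: "C > 0" using mvn_facts(3)[OF P D] by (simp add: C_def)
  have f: "mvn_density Sig x = exp (- (x \<bullet> (?O *v x)) / 2) / C" for x
    by (simp add: mvn_density_def C_def)
  define H where "H u = ennreal (exp (- u / 2) / C)" for u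
  have Hm[measurable]: "H \<in> borel_measurable borel" unfolding H_def by measurable
  have s: "1 - 2 * l > 0" using l by simp
  have "(\<integral>\<^sup>+w. ennreal (exp (l * (Y w \<bullet> (?O *v Y w)))) \<partial>M)
      = (\<integral>\<^sup>+x. ennreal (mvn_density Sig x) * ennreal (exp (l * (x \<bullet> (?O *v x)))) \<partial>lborel)"
    by (rule mvn_facts(1)[OF P D]) measurable
  also have "\<dots> = (\<integral>\<^sup>+x. H ((1 - 2 * l) * (x \<bullet> (?O *v x))) \<partial>lborel)"
  proof (rule nn_integral_cong)
    fix x
    have "exp (- (x \<bullet> (?O *v x)) / 2) / C * exp (l * (x \<bullet> (?O *v x)))
        = exp (- ((1 - 2 * l) * (x \<bullet> (?O *v x))) / 2) / C"
      by (simp add: exp_add[symmetric] field_simps)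
    then show "ennreal (mvn_density Sig x) * ennreal (exp (l * (x \<bullet> (?O *v x))))
        = H ((1 - 2 * l) * (x \<bullet> (?O *v x)))"
      unfolding H_def f using C by (simp add: ennreal_mult''[symmetric])
  qed
  also have "\<dots> = ennreal ((1 - 2 * l) powr (- (real CARD('n) / 2))) * (\<integral>\<^sup>+x. H (x \<bullet> (?O *v x)) \<partial>lborel)"
    by (rule lborel_scale_qf[OF Hm s])
  also have "(\<integral>\<^sup>+x. H (x \<bullet> (?O *v x)) \<partial>lborel) = 1"
    using mvn_facts(2)[OF P D] unfolding H_def f by simp
  finally show ?thesis by simp
qed

lemma chernoff_emeasure:
  fixes f :: "'a \<Rightarrow> real"
  assumes [measurable]: "f \<in> borel_measurable M"
  shows "emeasure M {w \<in> space M. c \<le> f w} \<le> ennreal (exp (- c)) * (\<integral>\<^sup>+w. ennreal (exp (f w)) \<partial>M)"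
proof -
  have "emeasure M {w \<in> space M. c \<le> f w} = (\<integral>\<^sup>+w. indicator {w \<in> space M. c \<le> f w} w \<partial>M)"
    by (rule nn_integral_indicator[symmetric]) measurable
  also have "\<dots> \<le> (\<integral>\<^sup>+w. ennreal (exp (- c)) * ennreal (exp (f w)) \<partial>M)"
  proof (rule nn_integral_mono)
    fix w assume w: "w \<in> space M"
    show "indicator {w \<in> space M. c \<le> f w} w \<le> ennreal (exp (- c)) * ennreal (exp (f w))"
    proof (cases "c \<le> f w")
      case True
      then have "1 \<le> exp (- c) * exp (f w)" by (simp add: exp_add[symmetric])
      then have "ennreal 1 \<le> ennreal (exp (- c) * exp (f w))" by (rule ennreal_leI)
      then show ?thesis using True w by (simp add: ennreal_mult'' indicator_def)
    qed (simp add: indicator_def)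
  qed
  also have "\<dots> = ennreal (exp (- c)) * (\<integral>\<^sup>+w. ennreal (exp (f w)) \<partial>M)"
    by (rule nn_integral_cmult) measurable
  finally show ?thesis .
qed

definition Qf :: "real^'p^'p \<Rightarrow> nat \<Rightarrow> (nat \<Rightarrow> 'a \<Rightarrow> real^'p) \<Rightarrow> 'a \<Rightarrow> real" where
  "Qf Sig n X w = (\<Sum>i<n. X i w \<bullet> (matrix_inv Sig *v X i w))"

context
  fixes M :: "'a measure" and n :: nat and Sig :: "real^'p^'p" and X :: "nat \<Rightarrow> 'a \<Rightarrow> real^'p"
  assumes P: "prob_space M" and spd: "sym_posdef Sig"
    and ind: "prob_space.indep_vars M (\<lambda>_. borel) X {..<n}"
    and dist: "\<And>i. i < n \<Longrightarrow> distributed M lborel (X i) (\<lambda>x. ennreal (mvn_density Sig x))"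
begin

lemma Xm[measurable]: "i < n \<Longrightarrow> X i \<in> borel_measurable M"
  using distributed_measurable[OF dist] by simp

lemma Q_meas[measurable]: "Qf Sig n X \<in> borel_measurable M"
  unfolding Qf_def
  by (intro borel_measurable_sum) (rule measurable_compose[OF Xm qf_meas], simp)

lemma qf_nonneg: "0 \<le> x \<bullet> (matrix_inv Sig *v x)"
  using spd_inv_pd[OF spd, of x] by (cases "x = 0") auto

lemma Q_nonneg: "0 \<le> Qf Sig n X w"
  unfolding Qf_def by (intro sum_nonneg qf_nonneg)

lemma mgf_Q:
  assumes l: "l < 1/2"
  shows "(\<integral>\<^sup>+w. ennreal (exp (l * Qf Sig n X w)) \<partial>M)
       = ennreal ((1 - 2 * l) powr (- (real n * real CARD('p) / 2)))"
proof -
  interpret prob_space M by (rule P)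
  let ?Y = "\<lambda>i w. ennreal (exp (l * (X i w \<bullet> (matrix_inv Sig *v X i w))))"
  have indY: "indep_vars (\<lambda>_. borel) ?Y {..<n}"
    by (rule indep_vars_compose2[OF ind]) measurable
  have "(\<integral>\<^sup>+w. ennreal (exp (l * Qf Sig n X w)) \<partial>M) = (\<integral>\<^sup>+w. (\<Prod>i<n. ?Y i w) \<partial>M)"
    by (simp add: Qf_def sum_distrib_left exp_sum prod_ennreal)
  also have "\<dots> = (\<Prod>i<n. \<integral>\<^sup>+w. ?Y i w \<partial>M)"
    by (rule indep_vars_nn_integral[OF _ indY]) auto
  also have "\<dots> = (\<Prod>i<n. ennreal ((1 - 2 * l) powr (- (real CARD('p) / 2))))"
    by (intro prod.cong refl mgf_single[OF P dist l]) simp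
  also have "\<dots> = ennreal (((1 - 2 * l) powr (- (real CARD('p) / 2))) ^ n)"
    by (simp add: ennreal_power)
  also have "((1 - 2 * l) powr (- (real CARD('p) / 2))) ^ n = (1 - 2 * l) powr (- (real n * real CARD('p) / 2))"
    using l by (subst powr_power) auto
  finally show ?thesis .
qed

lemma mgf_int:
  assumes l: "l < 1/2"
  shows "integrable M (\<lambda>w. exp (l * Qf Sig n X w))"
    and "(\<integral>w. exp (l * Qf Sig n X w) \<partial>M) = (1 - 2 * l) powr (- (real n * real CARD('p) / 2))"
proof -
  show "integrable M (\<lambda>w. exp (l * Qf Sig n X w))"
    by (rule integrableI_nn_integral_finite[OF _ _ mgf_Q[OF l]]) auto
  have "(\<integral>w. exp (l * Qf Sig n X w) \<partial>M) = enn2real (\<integral>\<^sup>+w. ennreal (exp (l * Qf Sig n X w)) \<partial>M)"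
    by (rule integral_eq_nn_integral) auto
  then show "(\<integral>w. exp (l * Qf Sig n X w) \<partial>M) = (1 - 2 * l) powr (- (real n * real CARD('p) / 2))"
    unfolding mgf_Q[OF l] by simp
qed

lemma Q_int: "integrable M (Qf Sig n X)"
proof (rule Bochner_Integration.integrable_bound[OF integrable_mult_right[where f="\<lambda>w. exp (1/4 * Qf Sig n X w)", OF mgf_int(1)]])
  show "AE w in M. norm (Qf Sig n X w) \<le> norm (4 * exp (1/4 * Qf Sig n X w))"
  proof (rule AE_I2)
    fix w
    have "Qf Sig n X w / 4 \<le> exp (Qf Sig n X w / 4)"
      using exp_ge_add_one_self[of "Qf Sig n X w / 4"] by linarith
    then show "norm (Qf Sig n X w) \<le> norm (4 * exp (1/4 * Qf Sig n X w))"
      using Q_nonneg[of w] by simp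
  qed
qed auto

lemma Q2_int: "integrable M (\<lambda>w. (Qf Sig n X w)^2)"
proof (rule Bochner_Integration.integrable_bound[OF integrable_mult_right[where f="\<lambda>w. exp (1/4 * Qf Sig n X w)", OF mgf_int(1)]])
  show "AE w in M. norm ((Qf Sig n X w)^2) \<le> norm (32 * exp (1/4 * Qf Sig n X w))"
  proof (rule AE_I2)
    fix w
    have "1 + Qf Sig n X w / 4 + (Qf Sig n X w / 4)^2/2 \<le> exp (Qf Sig n X w / 4)"
      using exp_quad_lower[of "Qf Sig n X w / 4"] Q_nonneg[of w] by simp
    then show "norm ((Qf Sig n X w)^2) \<le> norm (32 * exp (1/4 * Qf Sig n X w))"
      using Q_nonneg[of w] by (simp add: power2_eq_square)
  qed
qed auto

lemma ineq1:
  assumes l: "l < 1/2"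
  shows "1 + l * (\<integral>w. Qf Sig n X w \<partial>M) \<le> (1 - 2 * l) powr (- (real n * real CARD('p) / 2))"
proof -
  interpret prob_space M by (rule P)
  have "(\<integral>w. 1 + l * Qf Sig n X w \<partial>M) \<le> (\<integral>w. exp (l * Qf Sig n X w) \<partial>M)"
  proof (rule integral_mono)
    show "integrable M (\<lambda>w. 1 + l * Qf Sig n X w)"
      by (intro Bochner_Integration.integrable_add Bochner_Integration.integrable_mult_right Q_int) auto
  qed (auto intro: mgf_int(1)[OF l])
  moreover have "(\<integral>w. 1 + l * Qf Sig n X w \<partial>M) = 1 + l * (\<integral>w. Qf Sig n X w \<partial>M)"
    using Q_int by (simp add: prob_space)
  ultimately show ?thesis using mgf_int(2)[OF l] by simp
qed

lemma ineq2a: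
  assumes l: "0 \<le> l" "l < 1/2"
  shows "1 + l * (\<integral>w. Qf Sig n X w \<partial>M) + l^2 / 2 * (\<integral>w. (Qf Sig n X w)^2 \<partial>M)
         \<le> (1 - 2 * l) powr (- (real n * real CARD('p) / 2))"
proof -
  interpret prob_space M by (rule P)
  have "(\<integral>w. 1 + l * Qf Sig n X w + l^2 / 2 * (Qf Sig n X w)^2 \<partial>M) \<le> (\<integral>w. exp (l * Qf Sig n X w) \<partial>M)"
  proof (rule integral_mono)
    fix w assume "w \<in> space M"
    show "1 + l * Qf Sig n X w + l^2 / 2 * (Qf Sig n X w)^2 \<le> exp (l * Qf Sig n X w)"
      using exp_quad_lower[of "l * Qf Sig n X w"] Q_nonneg[of w] l by (simp add: power_mult_distrib)
  next
    show "integrable M (\<lambda>w. 1 + l * Qf Sig n X w + l^2 / 2 * (Qf Sig n X w)^2)"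
      by (intro Bochner_Integration.integrable_add Bochner_Integration.integrable_mult_right Q_int Q2_int) auto
  qed (auto intro: mgf_int(1)[OF l(2)])
  moreover have "(\<integral>w. 1 + l * Qf Sig n X w + l^2 / 2 * (Qf Sig n X w)^2 \<partial>M)
      = 1 + l * (\<integral>w. Qf Sig n X w \<partial>M) + l^2 / 2 * (\<integral>w. (Qf Sig n X w)^2 \<partial>M)"
    using Q_int Q2_int by (simp add: prob_space)
  ultimately show ?thesis using mgf_int(2)[OF l(2)] by simp
qed

lemma ineq2b:
  assumes l: "l \<le> 0"
  shows "(1 - 2 * l) powr (- (real n * real CARD('p) / 2))
         \<le> 1 + l * (\<integral>w. Qf Sig n X w \<partial>M) + l^2 / 2 * (\<integral>w. (Qf Sig n X w)^2 \<partial>M)"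
proof -
  interpret prob_space M by (rule P)
  have l2: "l < 1/2" using l by simp
  have "(\<integral>w. exp (l * Qf Sig n X w) \<partial>M) \<le> (\<integral>w. 1 + l * Qf Sig n X w + l^2 / 2 * (Qf Sig n X w)^2 \<partial>M)"
  proof (rule integral_mono)
    fix w assume "w \<in> space M"
    have "l * Qf Sig n X w \<le> 0" using Q_nonneg[of w] l by (simp add: mult_nonpos_nonneg)
    then show "exp (l * Qf Sig n X w) \<le> 1 + l * Qf Sig n X w + l^2 / 2 * (Qf Sig n X w)^2"
      using exp_quad_upper[of "l * Qf Sig n X w"] by (simp add: power_mult_distrib)
  next
    show "integrable M (\<lambda>w. 1 + l * Qf Sig n X w + l^2 / 2 * (Qf Sig n X w)^2)"
      by (intro Bochner_Integration.integrable_add Bochner_Integration.integrable_mult_right Q_int Q2_int) auto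
  qed (auto intro: mgf_int(1)[OF l2])
  moreover have "(\<integral>w. 1 + l * Qf Sig n X w + l^2 / 2 * (Qf Sig n X w)^2 \<partial>M)
      = 1 + l * (\<integral>w. Qf Sig n X w \<partial>M) + l^2 / 2 * (\<integral>w. (Qf Sig n X w)^2 \<partial>M)"
    using Q_int Q2_int by (simp add: prob_space)
  ultimately show ?thesis using mgf_int(2)[OF l2] by simp
qed

lemma ev_right: "eventually (\<lambda>l. 0 < l \<and> l < 1/2) (at_right (0::real))"
  unfolding eventually_at_right_field by (intro exI[of _ "1/2"]) auto

lemma ev_left: "eventually (\<lambda>l. l < 0) (at_left (0::real))"
  unfolding eventually_at_left_field by (intro exI[of _ "-1"]) auto

lemma moments:
  assumes n1: "n \<ge> 1"
  shows "(\<integral>w. Qf Sig n X w \<partial>M) = real n * real CARD('p)"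
    and "(\<integral>w. (Qf Sig n X w)^2 \<partial>M) = real n * real CARD('p) * (real n * real CARD('p) + 2)"
proof -
  define a where "a = real n * real CARD('p) / 2"
  have a: "a > 0" using n1 by (simp add: a_def)
  have Na: "real n * real CARD('p) = 2 * a" by (simp add: a_def)
  define m1 where "m1 = (\<integral>w. Qf Sig n X w \<partial>M)"
  define m2 where "m2 = (\<integral>w. (Qf Sig n X w)^2 \<partial>M)"
  have i1: "1 + l * m1 \<le> (1 - 2 * l) powr (- a)" if "l < 1/2" for l
    using ineq1[OF that] unfolding m1_def a_def by simp
  have lim1r: "((\<lambda>l. ((1 - 2*l) powr (-a) - 1)/l) \<longlongrightarrow> 2*a) (at_right 0)"
    using a by real_asymp
  have lim1l: "((\<lambda>l. ((1 - 2*l) powr (-a) - 1)/l) \<longlongrightarrow> 2*a) (at_left 0)"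
    using a by real_asymp
  have "m1 \<le> 2 * a"
  proof (rule tendsto_lowerbound[OF lim1r])
    show "\<forall>\<^sub>F l in at_right 0. m1 \<le> ((1 - 2 * l) powr - a - 1) / l"
      using ev_right by eventually_elim (use i1 in \<open>auto simp: pos_le_divide_eq algebra_simps\<close>)
  qed simp
  moreover have "m1 \<ge> 2 * a"
  proof (rule tendsto_upperbound[OF lim1l])
    show "\<forall>\<^sub>F l in at_left 0. m1 \<ge> ((1 - 2 * l) powr - a - 1) / l"
      using ev_left by eventually_elim (use i1 in \<open>auto simp: neg_divide_le_eq algebra_simps\<close>)
  qed simp
  ultimately have m1v: "m1 = 2 * a" by simp
  then show "(\<integral>w. Qf Sig n X w \<partial>M) = real n * real CARD('p)" unfolding m1_def Na .
  have i2a: "1 + l * (2 * a) + l^2 / 2 * m2 \<le> (1 - 2 * l) powr (- a)" if "0 \<le> l" "l < 1/2" for l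
    using ineq2a[OF that] m1v unfolding m1_def m2_def a_def by simp
  have i2b: "(1 - 2 * l) powr (- a) \<le> 1 + l * (2 * a) + l^2 / 2 * m2" if "l \<le> 0" for l
    using ineq2b[OF that] m1v unfolding m1_def m2_def a_def by simp
  have lim2r: "((\<lambda>l. 2*((1 - 2*l) powr (-a) - 1 - l * (2*a))/l^2) \<longlongrightarrow> - (4 * ((- a - 1) * a))) (at_right 0)"
    using a by real_asymp
  have lim2l: "((\<lambda>l. 2*((1 - 2*l) powr (-a) - 1 - l * (2*a))/l^2) \<longlongrightarrow> - (4 * ((- a - 1) * a))) (at_left 0)"
    using a by real_asymp
  have "m2 \<le> - (4 * ((- a - 1) * a))"
  proof (rule tendsto_lowerbound[OF lim2r])
    show "\<forall>\<^sub>F l in at_right 0. m2 \<le> 2*((1 - 2*l) powr (-a) - 1 - l * (2*a))/l^2"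
      using ev_right
    proof eventually_elim
      case (elim l)
      then have "l^2 > 0" by simp
      then show ?case using i2a[of l] elim by (simp add: pos_le_divide_eq algebra_simps)
    qed
  qed simp
  moreover have "m2 \<ge> - (4 * ((- a - 1) * a))"
  proof (rule tendsto_upperbound[OF lim2l])
    show "\<forall>\<^sub>F l in at_left 0. m2 \<ge> 2*((1 - 2*l) powr (-a) - 1 - l * (2*a))/l^2"
      using ev_left
    proof eventually_elim
      case (elim l)
      then have "l^2 > 0" by simp
      then show ?case using i2b[of l] elim by (simp add: pos_divide_le_eq algebra_simps)
    qed
  qed simp
  ultimately have "m2 = - (4 * ((- a - 1) * a))" by simp
  then show "(\<integral>w. (Qf Sig n X w)^2 \<partial>M) = real n * real CARD('p) * (real n * real CARD('p) + 2)"
    unfolding m2_def Na by (simp add: algebra_simps)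
qed

lemma chernoff_Q:
  assumes l: "l < 1/2"
  shows "measure M {w \<in> space M. c \<le> l * Qf Sig n X w}
         \<le> exp (- c) * (1 - 2 * l) powr (- (real n * real CARD('p) / 2))"
proof -
  interpret prob_space M by (rule P)
  have "ennreal (measure M {w \<in> space M. c \<le> l * Qf Sig n X w})
        = emeasure M {w \<in> space M. c \<le> l * Qf Sig n X w}"
    by (simp add: emeasure_eq_measure)
  also have "\<dots> \<le> ennreal (exp (- c)) * ennreal ((1 - 2 * l) powr (- (real n * real CARD('p) / 2)))"
    using chernoff_emeasure[of "\<lambda>w. l * Qf Sig n X w" M c] mgf_Q[OF l] by simp
  also have "\<dots> = ennreal (exp (- c) * (1 - 2 * l) powr (- (real n * real CARD('p) / 2)))"
    by (simp add: ennreal_mult'')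
  finally show ?thesis by (subst (asm) ennreal_le_iff) auto
qed

lemma Q_pos:
  assumes n1: "n \<ge> 1"
  shows "AE w in M. 0 < Qf Sig n X w"
proof -
  interpret prob_space M by (rule P)
  define a where "a = real n * real CARD('p) / 2"
  have a: "a > 0" using n1 by (simp add: a_def)
  let ?A = "{w \<in> space M. Qf Sig n X w \<le> 0}"
  have A: "?A \<in> sets M" by measurable
  have bnd: "measure M ?A \<le> (1 + 2 * m) powr (- a)" if m: "m > 0" for m
  proof -
    have "?A = {w \<in> space M. 0 \<le> (- m) * Qf Sig n X w}"
      using m by (auto simp: mult_le_0_iff zero_le_mult_iff)
    moreover have "- m < 1/2" using m by simp
    ultimately show ?thesis using chernoff_Q[of "- m" 0] unfolding a_def by simp
  qed
  have lim: "((\<lambda>m. (1 + 2 * m) powr (- a)) \<longlongrightarrow> 0) at_top" using a by real_asymp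
  have "measure M ?A \<le> 0"
  proof (rule tendsto_lowerbound[OF lim])
    show "\<forall>\<^sub>F m in at_top. measure M ?A \<le> (1 + 2 * m) powr (- a)"
      using eventually_gt_at_top[of "0::real"] by eventually_elim (rule bnd)
  qed simp
  then have "emeasure M ?A = 0" using A by (simp add: emeasure_eq_measure measure_nonneg antisym)
  then show ?thesis
    by (subst AE_iff_measurable[OF A]) auto
qed

lemma upper_tail:
  assumes n1: "n \<ge> 1" and x: "x > 0"
  defines "N \<equiv> real n * real CARD('p)"
  defines "u \<equiv> sqrt (x / N)"
  shows "measure M {w \<in> space M. N * (1 + 2 * u + 2 * u^2) \<le> Qf Sig n X w} \<le> exp (- x)"
proof -
  have N: "N > 0" using n1 by (simp add: N_def)
  have u: "u > 0" using N x by (simp add: u_def)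
  have xu: "x = N * u^2" using N x by (simp add: u_def)
  define l where "l = u / (1 + 2 * u)"
  have l: "0 < l" "l < 1/2" using u by (auto simp: l_def field_simps)
  have 1: "1 - 2 * l = 1 / (1 + 2 * u)" using u by (simp add: l_def field_simps)
  define c where "c = l * (N * (1 + 2 * u + 2 * u^2))"
  have set: "{w \<in> space M. N * (1 + 2 * u + 2 * u^2) \<le> Qf Sig n X w} = {w \<in> space M. c \<le> l * Qf Sig n X w}"
    using l by (auto simp: c_def)
  have "measure M {w \<in> space M. c \<le> l * Qf Sig n X w} \<le> exp (- c) * (1 - 2 * l) powr (- (N / 2))"
    using chernoff_Q[OF l(2), of c] unfolding N_def by simp
  also have "(1 - 2 * l) powr (- (N / 2)) = exp (N / 2 * ln (1 + 2 * u))"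
    unfolding 1 using u by (simp add: powr_def ln_div)
  also have "exp (- c) * exp (N / 2 * ln (1 + 2 * u)) = exp (N / 2 * ln (1 + 2 * u) - c)"
    by (simp add: exp_add[symmetric])
  also have "\<dots> \<le> exp (- x)"
  proof -
    have "ln (1 + 2 * u) \<le> 2 * u * (2 + 2 * u) / (2 * (1 + 2 * u))"
      using ln_upper_ms[of "2 * u"] u by simp
    then have "N / 2 * ln (1 + 2 * u) \<le> N / 2 * (2 * u * (2 + 2 * u) / (2 * (1 + 2 * u)))"
      using N by (intro mult_left_mono) auto
    also have "N / 2 * (2 * u * (2 + 2 * u) / (2 * (1 + 2 * u))) - c = - x"
    proof -
      have w: "1 + 2 * u > 0" using u by simp
      have "N / 2 * (2 * u * (2 + 2 * u) / (2 * (1 + 2 * u))) = N * u * (1 + u) / (1 + 2 * u)"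
        using w by (simp add: field_simps)
      moreover have "c = N * u * (1 + 2 * u + 2 * u^2) / (1 + 2 * u)"
        unfolding c_def l_def using w by (simp add: field_simps)
      ultimately have "N / 2 * (2 * u * (2 + 2 * u) / (2 * (1 + 2 * u))) - c
          = (N * u * (1 + u) - N * u * (1 + 2 * u + 2 * u^2)) / (1 + 2 * u)"
        by (simp add: diff_divide_distrib)
      also have "N * u * (1 + u) - N * u * (1 + 2 * u + 2 * u^2) = - (N * u^2) * (1 + 2 * u)"
        by (simp add: algebra_simps power2_eq_square)
      also have "- (N * u^2) * (1 + 2 * u) / (1 + 2 * u) = - x"
        using w xu by simp
      finally show ?thesis .
    qed
    finally show ?thesis by simp
  qed
  finally show ?thesis unfolding set .
qed

lemma lower_tail:
  assumes n1: "n \<ge> 1" and x: "x > 0"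
  defines "N \<equiv> real n * real CARD('p)"
  defines "u \<equiv> sqrt (x / N)"
  shows "measure M {w \<in> space M. Qf Sig n X w \<le> N * (1 - 2 * u)} \<le> exp (- x)"
proof -
  have N: "N > 0" using n1 by (simp add: N_def)
  have u: "u > 0" using N x by (simp add: u_def)
  have xu: "x = N * u^2" using N x by (simp add: u_def)
  define c where "c = - u * (N * (1 - 2 * u))"
  have set: "{w \<in> space M. Qf Sig n X w \<le> N * (1 - 2 * u)} = {w \<in> space M. c \<le> (- u) * Qf Sig n X w}"
    using u by (auto simp: c_def)
  have "measure M {w \<in> space M. c \<le> (- u) * Qf Sig n X w} \<le> exp (- c) * (1 - 2 * (- u)) powr (- (N / 2))"
    using chernoff_Q[of "- u" c] u unfolding N_def by simp
  also have "(1 - 2 * (- u)) powr (- (N / 2)) = exp (- (N / 2 * ln (1 + 2 * u)))"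
    using u by (simp add: powr_def)
  also have "exp (- c) * exp (- (N / 2 * ln (1 + 2 * u))) = exp (- c - N / 2 * ln (1 + 2 * u))"
    by (simp add: exp_add[symmetric])
  also have "\<dots> \<le> exp (- x)"
  proof -
    have "2 * u - (2 * u)^2 / 2 \<le> ln (1 + 2 * u)"
      using ln_lower_ms[of "2 * u"] u by simp
    then have "N / 2 * (2 * u - (2 * u)^2 / 2) \<le> N / 2 * ln (1 + 2 * u)"
      using N by (intro mult_left_mono) auto
    moreover have "- c - N / 2 * (2 * u - (2 * u)^2 / 2) = - x"
      unfolding c_def xu by (simp add: field_simps power2_eq_square)
    ultimately show ?thesis by simp
  qed
  finally show ?thesis unfolding set .
qed

end

theorem proposition3:
  fixes M :: "'a measure" and n :: nat and Sig :: "real^'p^'p" and k :: "'p"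
    and X :: "nat \<Rightarrow> 'a \<Rightarrow> real^'p"
  assumes "prob_space M"
    and "n \<ge> 1" and "CARD('p) \<ge> 2"
    and "sym_posdef Sig"
    and "prob_space.indep_vars M (\<lambda>_. borel) X {..<n}"
    and "\<And>i. i < n \<Longrightarrow> distributed M lborel (X i) (\<lambda>x. ennreal (mvn_density Sig x))"
    and "\<And>j. matrix_inv Sig $ j $ k \<noteq> 0"
  shows "feasible (Bmat (matrix_inv Sig)) =
           {phi. 0 < phi $ k \<and> (\<forall>j. phi $ j =
              (Bmat (matrix_inv Sig) $ k $ j / Bmat (matrix_inv Sig) $ j $ k) * phi $ k)}
       \<and> (AE w in M.
            phi_sml k (sample_cov n (\<lambda>i. X i w)) (Bmat (matrix_inv Sig))
              \<in> feasible (Bmat (matrix_inv Sig))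
          \<and> (\<forall>psi \<in> feasible (Bmat (matrix_inv Sig)).
               psi \<noteq> phi_sml k (sample_cov n (\<lambda>i. X i w)) (Bmat (matrix_inv Sig)) \<longrightarrow>
               loglik (sample_cov n (\<lambda>i. X i w)) (Bmat (matrix_inv Sig)) psi
                 < loglik (sample_cov n (\<lambda>i. X i w)) (Bmat (matrix_inv Sig))
                     (phi_sml k (sample_cov n (\<lambda>i. X i w)) (Bmat (matrix_inv Sig)))))
       \<and> (\<forall>j. prob_space.expectation M
               (\<lambda>w. (phi_sml k (sample_cov n (\<lambda>i. X i w)) (Bmat (matrix_inv Sig)) $ j
                      - phistar (matrix_inv Sig) $ j) ^ 2)
             = 2 * (phistar (matrix_inv Sig) $ j) ^ 2 / (real n * real CARD('p)))
       \<and> (\<forall>t > 0. prob_space.prob M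
             {w \<in> space M.
               (MAX j\<in>UNIV. \<bar>phi_sml k (sample_cov n (\<lambda>i. X i w)) (Bmat (matrix_inv Sig)) $ j
                               - phistar (matrix_inv Sig) $ j\<bar> / phistar (matrix_inv Sig) $ j)
               > 2 * sqrt ((t + ln (real CARD('p))) / (real n * real CARD('p)))
                 + 2 * (t + ln (real CARD('p))) / (real n * real CARD('p))}
           \<le> 2 * exp (- t))"
proof -
  note P = assms(1) and n1 = assms(2) and p2 = assms(3) and spd = assms(4)
    and ind = assms(5) and dist = assms(6) and nz = assms(7)
  interpret prob_space M by (rule P)
  let ?O = "matrix_inv Sig"
  let ?B = "Bmat ?O"
  let ?S = "\<lambda>w. sample_cov n (\<lambda>i. X i w)"
  let ?ph = "\<lambda>w. phi_sml k (?S w) ?B"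
  define Q where "Q = Qf Sig n X"
  define N where "N = real n * real CARD('p)"
  have N: "N > 0" using n1 by (simp add: N_def)
  have dpos: "\<And>j. 0 < ?O $ j $ j" using spd_inv_diag_pos[OF spd] .
  have Qpos: "AE w in M. 0 < Qf Sig n X w" by (rule Q_pos[OF P spd ind]) (use dist n1 in auto)
  have mom: "(\<integral>w. Qf Sig n X w \<partial>M) = real n * real CARD('p)"
      "(\<integral>w. (Qf Sig n X w)^2 \<partial>M) = real n * real CARD('p) * (real n * real CARD('p) + 2)"
    by (rule moments[OF P spd ind], (use dist n1 in auto))+
  have QI0: "integrable M (Qf Sig n X)" "integrable M (\<lambda>w. (Qf Sig n X w)^2)"
    by (rule Q_int[OF P spd ind], use dist in auto) (rule Q2_int[OF P spd ind], use dist in auto)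
  have Qm: "Qf Sig n X \<in> borel_measurable M" by (rule Q_meas[OF P spd ind]) (use dist in auto)
  have ut: "measure M {w \<in> space M. real n * real CARD('p) * (1 + 2 * sqrt (x / (real n * real CARD('p)))
      + 2 * (sqrt (x / (real n * real CARD('p))))^2) \<le> Qf Sig n X w} \<le> exp (- x)" if "x > 0" for x
    by (rule upper_tail[OF P spd ind]) (use dist n1 that in auto)
  have lt: "measure M {w \<in> space M. Qf Sig n X w \<le> real n * real CARD('p) * (1 - 2 * sqrt (x / (real n * real CARD('p))))}
      \<le> exp (- x)" if "x > 0" for x
    by (rule lower_tail[OF P spd ind]) (use dist n1 that in auto)
  have nz0: "\<And>j. ?O $ j $ j \<noteq> 0" using dpos by (metis less_irrefl)
  have tr: "trace (?S w ** ?O) = Q w / real n" for w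
    unfolding trace_sample_cov Q_def Qf_def ..
  have ph: "?ph w $ j = (Q w / N) / ?O $ j $ j" for w j
    unfolding phi_sml_eq[OF spd nz] tr N_def using n1 by (simp add: field_simps)
  have ps: "phistar ?O $ j = 1 / ?O $ j $ j" for j by (simp add: phistar_def)
  have part1: "feasible ?B = {phi. 0 < phi $ k \<and> (\<forall>j. phi $ j = (?B $ k $ j / ?B $ j $ k) * phi $ k)}"
    by (rule feasible_char[OF spd nz])
  have part2: "AE w in M. ?ph w \<in> feasible ?B \<and>
        (\<forall>psi \<in> feasible ?B. psi \<noteq> ?ph w \<longrightarrow> loglik (?S w) ?B psi < loglik (?S w) ?B (?ph w))"
    using Qpos
  proof eventually_elim
    case (elim w)
    then have Qp: "0 < Q w" by (simp add: Q_def)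
    define T where "T = trace (?S w ** ?O)"
    have T: "T = Q w / real n" unfolding T_def tr ..
    have Tp: "T > 0" using Qp n1 by (simp add: T)
    define p where "p = real CARD('p)"
    have p: "p > 0" by (simp add: p_def)
    have chat: "Q w / N = T / p" using n1 by (simp add: T N_def p_def)
    have chp: "T / p > 0" using Tp p by simp
    have phc: "\<And>j. ?ph w $ j = (T / p) / ?O $ j $ j" by (simp only: ph chat)
    have feas: "?ph w \<in> feasible ?B"
      unfolding feasible_iff_c[OF spd nz] using chp phc by blast
    have ll_ph: "loglik (?S w) ?B (?ph w) = - (p * ln (T / p) + T / (T / p)) + (\<Sum>j\<in>UNIV. ln (?O $ j $ j))"
      unfolding T_def p_def by (rule loglik_c[OF dpos chp[unfolded T_def p_def] phc[unfolded T_def p_def]])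
    show ?case
    proof (intro conjI feas ballI impI)
      fix psi assume psi: "psi \<in> feasible ?B" and ne: "psi \<noteq> ?ph w"
      obtain c where c: "c > 0" and pc: "\<And>j. psi $ j = c / ?O $ j $ j"
        using psi unfolding feasible_iff_c[OF spd nz] by blast
      have cne: "c \<noteq> T / p"
      proof
        assume "c = T / p"
        then have "psi = ?ph w" by (simp add: vec_eq_iff pc phc)
        then show False using ne by simp
      qed
      have ll_psi: "loglik (?S w) ?B psi = - (p * ln c + T / c) + (\<Sum>j\<in>UNIV. ln (?O $ j $ j))"
        unfolding T_def p_def by (rule loglik_c[OF dpos c pc])
      show "loglik (?S w) ?B psi < loglik (?S w) ?B (?ph w)"
        unfolding ll_psi ll_ph using mle_unique[OF p Tp c cne] by simp
    qed
  qed
  have part3: "expectation (\<lambda>w. (?ph w $ j - phistar ?O $ j) ^ 2)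
      = 2 * (phistar ?O $ j) ^ 2 / (real n * real CARD('p))" for j
  proof -
    define od where "od = ?O $ j $ j"
    have od: "od > 0" using dpos by (simp add: od_def)
    have eqf: "(\<lambda>w. (?ph w $ j - phistar ?O $ j) ^ 2)
        = (\<lambda>w. 1 / (N^2 * od^2) * (Q w)^2 + (- 2 / (N * od^2)) * Q w + 1 / od^2)"
    proof
      fix w
      show "(?ph w $ j - phistar ?O $ j) ^ 2 = 1 / (N^2 * od^2) * (Q w)^2 + (- 2 / (N * od^2)) * Q w + 1 / od^2"
        unfolding ph ps od_def[symmetric] using N od by (simp add: field_simps power2_eq_square)
    qed
    have m: "(\<integral>w. Q w \<partial>M) = N" "(\<integral>w. (Q w)^2 \<partial>M) = N * (N + 2)"
      using mom unfolding Q_def N_def by auto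
    have QI: "integrable M Q" "integrable M (\<lambda>w. (Q w)^2)"
      using QI0 unfolding Q_def by auto
    have "expectation (\<lambda>w. (?ph w $ j - phistar ?O $ j) ^ 2)
        = 1 / (N^2 * od^2) * (N * (N + 2)) + (- 2 / (N * od^2)) * N + 1 / od^2"
      unfolding eqf using QI m by (simp add: prob_space)
    also have "\<dots> = 2 * (phistar ?O $ j) ^ 2 / (real n * real CARD('p))"
      unfolding ps od_def[symmetric] N_def[symmetric] using N od by (simp add: field_simps power2_eq_square)
    finally show ?thesis .
  qed
  have part4: "prob {w \<in> space M.
               (MAX j\<in>UNIV. \<bar>?ph w $ j - phistar ?O $ j\<bar> / phistar ?O $ j)
               > 2 * sqrt ((t + ln (real CARD('p))) / (real n * real CARD('p)))
                 + 2 * (t + ln (real CARD('p))) / (real n * real CARD('p))}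
           \<le> 2 * exp (- t)" if t: "t > 0" for t
  proof -
    define x where "x = t + ln (real CARD('p))"
    have lp: "ln (real CARD('p)) > 0" using p2 by simp
    have x: "x > 0" using t lp unfolding x_def by linarith
    define u where "u = sqrt (x / N)"
    have u2: "u^2 = x / N" using x N by (simp add: u_def)
    have maxeq: "(MAX j\<in>UNIV. \<bar>?ph w $ j - phistar ?O $ j\<bar> / phistar ?O $ j) = \<bar>Q w / N - 1\<bar>" for w
    proof -
      have "\<And>j. \<bar>?ph w $ j - phistar ?O $ j\<bar> / phistar ?O $ j = \<bar>Q w / N - 1\<bar>"
      proof -
        fix j
        have "?ph w $ j - phistar ?O $ j = (Q w / N - 1) / ?O $ j $ j"
          unfolding ph ps by (simp add: diff_divide_distrib)
        then show "\<bar>?ph w $ j - phistar ?O $ j\<bar> / phistar ?O $ j = \<bar>Q w / N - 1\<bar>"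
          unfolding ps using dpos[of j] by simp
      qed
      then show ?thesis by simp
    qed
    let ?E = "{w \<in> space M.
               (MAX j\<in>UNIV. \<bar>?ph w $ j - phistar ?O $ j\<bar> / phistar ?O $ j)
               > 2 * sqrt ((t + ln (real CARD('p))) / (real n * real CARD('p)))
                 + 2 * (t + ln (real CARD('p))) / (real n * real CARD('p))}"
    let ?A1 = "{w \<in> space M. N * (1 + 2 * u + 2 * u^2) \<le> Qf Sig n X w}"
    let ?A2 = "{w \<in> space M. Qf Sig n X w \<le> N * (1 - 2 * u)}"
    have sub: "?E \<subseteq> ?A1 \<union> ?A2"
    proof
      fix w assume "w \<in> ?E"
      then have w: "w \<in> space M" and gt: "\<bar>Q w / N - 1\<bar> > 2 * u + 2 * u^2"
        unfolding maxeq u2 by (auto simp: u_def x_def N_def)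
      have u0: "u \<ge> 0" unfolding u_def using x N by simp
      show "w \<in> ?A1 \<union> ?A2"
      proof (cases "Q w / N - 1 \<ge> 0")
        case True
        then have "Q w / N > 1 + 2 * u + 2 * u^2" using gt by simp
        then have "N * (1 + 2 * u + 2 * u^2) \<le> Q w" using N by (simp add: field_simps)
        then show ?thesis using w by (simp add: Q_def)
      next
        case False
        then have "Q w / N < 1 - 2 * u - 2 * u^2" using gt by simp
        then have "Q w / N \<le> 1 - 2 * u" using u0 by (smt (verit) zero_le_power2)
        then have "Q w \<le> N * (1 - 2 * u)" using N by (simp add: field_simps)
        then show ?thesis using w by (simp add: Q_def)
      qed
    qed
    have A1: "?A1 \<in> sets M" using Qm by measurable
    have A2: "?A2 \<in> sets M" using Qm by measurable
    have "prob ?E \<le> prob (?A1 \<union> ?A2)" by (rule finite_measure_mono[OF sub]) (use A1 A2 in auto)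
    also have "\<dots> \<le> prob ?A1 + prob ?A2" by (rule measure_Un_le[OF A1 A2])
    also have "\<dots> \<le> exp (- x) + exp (- x)"
      using ut[OF x] lt[OF x] unfolding u_def N_def by (intro add_mono) auto
    also have "\<dots> \<le> 2 * exp (- t)"
      using lp by (simp add: x_def)
    finally show ?thesis .
  qed
  show ?thesis using part1 part2 part3 part4 by blast
qed

end
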